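(* Let $b\ge2$, $\ell\ge1$, $m=b^{\ell+1}$. For $\operatorname{Re}(s)>1$, \[ F^{\circ}(s)+\sum_{\substack{p\le m\\ p\nmid b}}\frac{S^{\circ}(p)}{p^{s}}=\sum_{\substack{\chi\bmod m\\ \chi(-1)=-1}}\hat{S}^{\circ}(\chi)\,P(s,\chi),\qquad P(s,\chi)=\sum_{p}\frac{\chi(p)}{p^s}, \] and every character appearing on the right is non-principal; in particular the decomposition of $F^{\circ}$ over characters modulo $m$ contains no term proportional to $\sum_p p^{-s}$ (no Mertens term).
   Context: The collision deviation $S_\ell(p)$ is a real-valued invariant of primes $p$ with $\gcd(p,b)=1$, introduced in a companion paper; it depends only on $p\bmod m$, $m=b^{\ell+1}$, so it is regarded as a function $S$ on $(\mathbb{Z}/m\mathbb{Z})^{\times}$. It satisfies the reflection identity $S(a)+S(m-a)=-1$ for every unit $a$ mod $m$ (established in the companion paper, taken as given). The spectral class of a unit $a$ is $R(a)=(a-1)\bmod b$; $\overline{S}_R$ is the average of $S$ over units with spectral class $R$; the centered collision deviation is $S^{\circ}(a)=S(a)-\overline{S}_{R(a)}$, $S^{\circ}(p)=S^{\circ}(p\bmod m)$, and $\hat{S}^{\circ}(\chi)=\frac{1}{\phi(m)}\sum_a S^{\circ}(a)\overline{\chi}(a)$. Finally $F^{\circ}(s)=\sum_{p>m,\ \gcd(p,b)=1}S^{\circ}(p)p^{-s}$. *)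

theory Defs
  imports "HOL-Analysis.Analysis" "HOL-Number_Theory.Number_Theory"
begin

definition dirichlet_char :: "nat \<Rightarrow> (int \<Rightarrow> complex) \<Rightarrow> bool" where
  "dirichlet_char m chi \<longleftrightarrow>
     (\<forall>x y. chi (x * y) = chi x * chi y) \<and>
     (\<forall>x. chi (x + int m) = chi x) \<and>
     (\<forall>x. chi x = 0 \<longleftrightarrow> \<not> coprime x (int m))"

definition principal_char :: "nat \<Rightarrow> int \<Rightarrow> complex" where
  "principal_char m x = (if coprime x (int m) then 1 else 0)"

text \<open>Units of Z/mZ, represented by their least nonnegative residues.\<close>
definition units_mod :: "nat \<Rightarrow> nat set" where
  "units_mod m = {a. a < m \<and> coprime a m}"

definition spec_class :: "nat \<Rightarrow> nat \<Rightarrow> nat" where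
  "spec_class b a = (a - 1) mod b"

definition Sbar :: "nat \<Rightarrow> nat \<Rightarrow> (nat \<Rightarrow> real) \<Rightarrow> nat \<Rightarrow> real" where
  "Sbar b m S R =
     (\<Sum>a\<in>{a \<in> units_mod m. spec_class b a = R}. S a) /
       real (card {a \<in> units_mod m. spec_class b a = R})"

definition Scirc :: "nat \<Rightarrow> nat \<Rightarrow> (nat \<Rightarrow> real) \<Rightarrow> nat \<Rightarrow> real" where
  "Scirc b m S a = S a - Sbar b m S (spec_class b a)"

definition Shat :: "nat \<Rightarrow> nat \<Rightarrow> (nat \<Rightarrow> real) \<Rightarrow> (int \<Rightarrow> complex) \<Rightarrow> complex" where
  "Shat b m S chi = (1 / of_nat (totient m)) *
     (\<Sum>a\<in>units_mod m. complex_of_real (Scirc b m S a) * cnj (chi (int a)))"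

definition Fcirc :: "nat \<Rightarrow> nat \<Rightarrow> (nat \<Rightarrow> real) \<Rightarrow> complex \<Rightarrow> complex" where
  "Fcirc b m S s = infsum (\<lambda>p. complex_of_real (Scirc b m S (p mod m)) * of_nat p powr (- s))
     {p. prime p \<and> p > m \<and> coprime p b}"

definition Pchi :: "complex \<Rightarrow> (int \<Rightarrow> complex) \<Rightarrow> complex" where
  "Pchi s chi = infsum (\<lambda>p. chi (int p) * of_nat p powr (- s)) {p::nat. prime p}"

end

theory Submission
  imports Defs "HOL-Algebra.Multiplicative_Group"
begin

definition submon :: "('a, 'b) monoid_scheme \<Rightarrow> 'a set \<Rightarrow> bool" where
  "submon G H \<longleftrightarrow> H \<subseteq> carrier G \<and> \<one>\<^bsub>G\<^esub> \<in> H \<and> (\<forall>a\<in>H. \<forall>b\<in>H. a \<otimes>\<^bsub>G\<^esub> b \<in> H)"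

definition charon :: "('a, 'b) monoid_scheme \<Rightarrow> 'a set \<Rightarrow> ('a \<Rightarrow> complex) \<Rightarrow> bool" where
  "charon G H f \<longleftrightarrow> (\<forall>a\<in>H. \<forall>b\<in>H. f (a \<otimes>\<^bsub>G\<^esub> b) = f a * f b) \<and> (\<forall>a\<in>H. f a \<noteq> 0)"

context comm_group
begin

lemma submon_pow: "submon G H \<Longrightarrow> h \<in> H \<Longrightarrow> h [^] (k::nat) \<in> H"
  by (induction k) (auto simp: submon_def)

lemma charon_one: "submon G H \<Longrightarrow> charon G H f \<Longrightarrow> f \<one> = 1"
proof -
  assume a: "submon G H" "charon G H f"
  then have "f \<one> = f \<one> * f \<one>" "f \<one> \<noteq> 0" unfolding charon_def submon_def
    by (metis l_one subsetD)+
  then show ?thesis by (metis mult_cancel_left1)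
qed

lemma charon_pow: "submon G H \<Longrightarrow> charon G H f \<Longrightarrow> h \<in> H \<Longrightarrow> f (h [^] (k::nat)) = f h ^ k"
proof (induction k)
  case 0 then show ?case by (simp add: charon_one)
next
  case (Suc k)
  have "h [^] Suc k = h [^] k \<otimes> h" by simp
  moreover have "h [^] k \<in> H" using Suc submon_pow by blast
  ultimately show ?case using Suc by (simp add: charon_def)
qed

lemma submon_inv:
  assumes fin: "finite (carrier G)" and "submon G H" "h \<in> H" shows "inv h \<in> H"
proof -
  have hc: "h \<in> carrier G" using assms unfolding submon_def by blast
  have o: "order G > 0" using fin by (simp add: order_gt_0_iff_finite)
  have "h [^] (order G - 1) \<otimes> h = \<one>"
    using pow_order_eq_1[OF hc] o by (metis Suc_diff_1 nat_pow_Suc)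
  then have "inv h = h [^] (order G - 1)"
    using hc by (metis inv_equality nat_pow_closed)
  then show ?thesis using submon_pow assms by simp
qed

lemma ext_core:
  assumes fin: "finite (carrier G)" and sH: "submon G H" and cf: "charon G H f"
    and g: "g \<in> carrier G" and n: "n > 0" "g [^] n \<in> H"
    and nmin: "\<And>k. 0 < k \<Longrightarrow> k < n \<Longrightarrow> g [^] k \<notin> H"
    and c: "c ^ n = f (g [^] n)"
  shows "\<exists>H' f'. submon G H' \<and> charon G H' f' \<and> H \<subseteq> H' \<and> g \<in> H'
            \<and> (\<forall>a\<in>H. f' a = f a) \<and> f' g = c"
proof -
  have Hc: "H \<subseteq> carrier G" using sH unfolding submon_def by blast
  have powH: "g [^] d \<in> H \<Longrightarrow> f (g [^] d) = c ^ d" for d :: nat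
  proof -
    assume gd: "g [^] d \<in> H"
    define q r where "q = d div n" and "r = d mod n"
    have dq: "d = n * q + r" by (simp add: q_def r_def)
    have gr: "g [^] r \<in> carrier G" using g by (rule nat_pow_closed)
    have "(g [^] n) [^] q \<otimes> g [^] r = g [^] (n * q) \<otimes> g [^] r" by (simp only: nat_pow_pow[OF g])
    also have "\<dots> = g [^] (n * q + r)" by (rule nat_pow_mult[OF g])
    also have "n * q + r = d" by (rule dq[symmetric])
    finally have gn: "g [^] d = (g [^] n) [^] q \<otimes> g [^] r" by (rule sym)
    have gq: "(g [^] n) [^] q \<in> H" using submon_pow[OF sH n(2)] .
    have Xc: "(g [^] n) [^] q \<in> carrier G" using gq Hc by blast
    have gdc: "g [^] d \<in> carrier G" using g by (rule nat_pow_closed)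
    have "g [^] r = inv ((g [^] n) [^] q) \<otimes> g [^] d \<longleftrightarrow> g [^] d = (g [^] n) [^] q \<otimes> g [^] r"
      by (rule inv_solve_left[OF gr Xc gdc])
    then have "g [^] r = inv ((g [^] n) [^] q) \<otimes> g [^] d" using gn by blast
    also have "\<dots> \<in> H" using submon_inv[OF fin sH gq] gd sH unfolding submon_def by blast
    finally have grH: "g [^] r \<in> H" .
    have "r < n" using n by (simp add: r_def)
    have r0: "r = 0"
    proof (rule ccontr)
      assume "r \<noteq> 0" then have "0 < r" by simp
      then show False using nmin[of r] \<open>r < n\<close> grH by blast
    qed
    have "g [^] d = (g [^] n) [^] q \<otimes> g [^] (0::nat)" using gn r0 by (simp only:)
    also have "\<dots> = (g [^] n) [^] q" using Xc by simp
    finally have gdX: "g [^] d = (g [^] n) [^] q" .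
    have "f (g [^] d) = f ((g [^] n) [^] q)" by (simp only: gdX)
    also have "\<dots> = f (g [^] n) ^ q" using charon_pow[OF sH cf n(2)] .
    also have "\<dots> = (c ^ n) ^ q" by (simp only: c)
    also have "\<dots> = c ^ (n * q)" by (simp only: power_mult)
    also have "n * q = d" using dq r0 by simp
    finally show ?thesis .
  qed
  have wd1: "f h * c ^ k = f h' * c ^ k'"
    if "h \<in> H" "h' \<in> H" "h \<otimes> g [^] k = h' \<otimes> g [^] k'" "k' \<le> k" for h h' and k k' :: nat
  proof -
    define d where "d = k - k'"
    have hc: "h \<in> carrier G" "h' \<in> carrier G" using that Hc by auto
    have kk: "k = d + k'" using that(4) by (simp add: d_def)
    have "h \<otimes> g [^] d \<otimes> g [^] k' = h \<otimes> g [^] k"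
      using g hc by (simp add: kk m_assoc nat_pow_mult)
    also have "\<dots> = h' \<otimes> g [^] k'" using that(3) .
    finally have "h \<otimes> g [^] d \<otimes> g [^] k' = h' \<otimes> g [^] k'" .
    then have e: "h \<otimes> g [^] d = h'" using g hc by simp
    have "g [^] d = inv h \<otimes> h'"
      using inv_solve_left[of "g [^] d" h h'] e hc g by simp
    also have "\<dots> \<in> H" using submon_inv[OF fin sH that(1)] that sH unfolding submon_def by blast
    finally have gd: "g [^] d \<in> H" .
    have "f h' = f (h \<otimes> g [^] d)" using e by simp
    also have "\<dots> = f h * f (g [^] d)" using cf that(1) gd unfolding charon_def by blast
    also have "f (g [^] d) = c ^ d" using powH[OF gd] .
    finally have "f h' = f h * c ^ d" .
    then show ?thesis by (simp add: kk power_add mult.assoc)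
  qed
  have wd: "f h * c ^ k = f h' * c ^ k'"
    if "h \<in> H" "h' \<in> H" "h \<otimes> g [^] k = h' \<otimes> g [^] k'" for h h' and k k' :: nat
  proof (cases "k' \<le> k")
    case True then show ?thesis using wd1[OF that] by blast
  next
    case False then show ?thesis using wd1[OF that(2,1) that(3)[symmetric]] by simp
  qed
  define H' where "H' = {y. \<exists>h\<in>H. \<exists>k::nat. y = h \<otimes> g [^] k}"
  have memH': "y \<in> H' \<longleftrightarrow> (\<exists>h\<in>H. \<exists>k::nat. y = h \<otimes> g [^] k)" for y
    unfolding H'_def by simp
  define f' where "f' y = (SOME v. \<exists>h\<in>H. \<exists>k::nat. y = h \<otimes> g [^] k \<and> v = f h * c ^ k)" for y
  have f'eq: "f' (h \<otimes> g [^] k) = f h * c ^ k" if "h \<in> H" for h and k :: nat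
  proof -
    have "\<exists>h'\<in>H. \<exists>k'::nat. h \<otimes> g [^] k = h' \<otimes> g [^] k' \<and> f' (h \<otimes> g [^] k) = f h' * c ^ k'"
      unfolding f'_def by (rule someI_ex) (use that in blast)
    then obtain h' and k' :: nat where "h' \<in> H" "h \<otimes> g [^] k = h' \<otimes> g [^] k'"
       "f' (h \<otimes> g [^] k) = f h' * c ^ k'" by blast
    then show ?thesis using wd[OF that \<open>h' \<in> H\<close>] by simp
  qed
  have fH0: "\<And>a. a \<in> H \<Longrightarrow> f a \<noteq> 0" using cf unfolding charon_def by blast
  have fHm: "\<And>a b. a \<in> H \<Longrightarrow> b \<in> H \<Longrightarrow> f (a \<otimes> b) = f a * f b" using cf unfolding charon_def by blast
  have Hm: "\<And>a b. a \<in> H \<Longrightarrow> b \<in> H \<Longrightarrow> a \<otimes> b \<in> H" using sH unfolding submon_def by blast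
  have one: "\<one> \<in> H" using sH submon_def by blast
  have c0: "c \<noteq> 0"
  proof
    assume "c = 0" then have "f (g [^] n) = 0" using c n by (auto simp: power_0_left)
    then show False using fH0 n by blast
  qed
  have prodeq: "(h \<otimes> g [^] k) \<otimes> (h' \<otimes> g [^] k') = (h \<otimes> h') \<otimes> g [^] (k + k')"
    if "h \<in> H" "h' \<in> H" for h h' and k k' :: nat
  proof -
    have hc: "h \<in> carrier G" "h' \<in> carrier G" using that Hc by auto
    have "(h \<otimes> g [^] k) \<otimes> (h' \<otimes> g [^] k') = h \<otimes> (g [^] k \<otimes> h') \<otimes> g [^] k'"
      using hc g by (simp add: m_assoc)
    also have "g [^] k \<otimes> h' = h' \<otimes> g [^] k" using hc g by (simp add: m_comm)
    also have "h \<otimes> (h' \<otimes> g [^] k) \<otimes> g [^] k' = (h \<otimes> h') \<otimes> (g [^] k \<otimes> g [^] k')"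
      using hc g by (simp add: m_assoc)
    also have "g [^] k \<otimes> g [^] k' = g [^] (k + k')" using g by (simp add: nat_pow_mult)
    finally show ?thesis .
  qed
  have sH': "submon G H'"
    unfolding submon_def
  proof (intro conjI)
    show "H' \<subseteq> carrier G"
    proof
      fix y assume "y \<in> H'"
      then obtain h and k :: nat where "y = h \<otimes> g [^] k" "h \<in> H" unfolding memH' by blast
      moreover have "h \<in> carrier G" using \<open>h \<in> H\<close> Hc by blast
      ultimately show "y \<in> carrier G" using g by simp
    qed
    have "\<one> = \<one> \<otimes> g [^] (0::nat)" by simp
    then show "\<one> \<in> H'" using one memH' by blast
    show "\<forall>a\<in>H'. \<forall>b\<in>H'. a \<otimes> b \<in> H'"
    proof (intro ballI)
      fix a b assume "a \<in> H'" "b \<in> H'"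
      then obtain h h' and k k' :: nat where ab: "a = h \<otimes> g [^] k" "b = h' \<otimes> g [^] k'" "h \<in> H" "h' \<in> H"
        unfolding memH' by blast
      then have "a \<otimes> b = (h \<otimes> h') \<otimes> g [^] (k + k')" using prodeq by simp
      moreover have "h \<otimes> h' \<in> H" using Hm ab by blast
      ultimately show "a \<otimes> b \<in> H'" unfolding memH' by blast
    qed
  qed
  have cH': "charon G H' f'"
    unfolding charon_def
  proof (intro conjI ballI)
    fix a b assume "a \<in> H'" "b \<in> H'"
    then obtain h h' and k k' :: nat where ab: "a = h \<otimes> g [^] k" "b = h' \<otimes> g [^] k'" "h \<in> H" "h' \<in> H"
      unfolding memH' by blast
    then have "a \<otimes> b = (h \<otimes> h') \<otimes> g [^] (k + k')" using prodeq by simp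
    moreover have "h \<otimes> h' \<in> H" using Hm ab by blast
    ultimately have "f' (a \<otimes> b) = f (h \<otimes> h') * c ^ (k + k')" using f'eq by simp
    also have "\<dots> = (f h * c ^ k) * (f h' * c ^ k')" using fHm ab by (simp add: power_add)
    also have "\<dots> = f' a * f' b" using ab f'eq by simp
    finally show "f' (a \<otimes> b) = f' a * f' b" .
  next
    fix a assume "a \<in> H'"
    then obtain h and k :: nat where "a = h \<otimes> g [^] k" "h \<in> H" unfolding memH' by blast
    then show "f' a \<noteq> 0" using f'eq fH0 c0 by simp
  qed
  have hid: "h \<otimes> g [^] (0::nat) = h" if "h \<in> H" for h using that Hc by auto
  have HH': "H \<subseteq> H'"
  proof
    fix h assume h: "h \<in> H"
    have "\<exists>k::nat. h = h \<otimes> g [^] k" using hid[OF h] by (intro exI[of _ 0]) simp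
    then show "h \<in> H'" unfolding memH' using h by blast
  qed
  have ext: "\<forall>a\<in>H. f' a = f a"
  proof
    fix h assume "h \<in> H" 
    then have "f' (h \<otimes> g [^] (0::nat)) = f h" using f'eq[OF \<open>h \<in> H\<close>, of 0] by simp
    moreover have "h \<otimes> g [^] (0::nat) = h" using hid[OF \<open>h \<in> H\<close>] .
    ultimately show "f' h = f h" by simp
  qed
  have geq: "\<one> \<otimes> g [^] (1::nat) = g" using g by simp
  have "\<exists>k::nat. g = \<one> \<otimes> g [^] k" using geq by (intro exI[of _ 1]) simp
  then have gH': "g \<in> H'" unfolding memH' using one by blast
  have fg: "f' g = c"
    using f'eq[OF one, of 1] charon_one[OF sH cf] geq by simp
  have "submon G H' \<and> charon G H' f' \<and> H \<subseteq> H' \<and> g \<in> H'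
            \<and> (\<forall>a\<in>H. f' a = f a) \<and> f' g = c" using sH' cH' HH' gH' ext fg by blast
  then show ?thesis by (intro exI[of _ H'] exI[of _ f'])
qed

lemma complex_root_ex: "(w::complex) \<noteq> 0 \<Longrightarrow> n > 0 \<Longrightarrow> \<exists>c. c ^ n = w"
proof -
  assume w: "w \<noteq> 0" and n: "n > 0"
  have "exp (Ln w / of_nat n) ^ n = exp (of_nat n * (Ln w / of_nat n))"
    by (simp only: exp_of_nat_mult)
  also have "of_nat n * (Ln w / of_nat n) = Ln w" using n by simp
  also have "exp (Ln w) = w" using w by simp
  finally show ?thesis by blast
qed

lemma ext_step:
  assumes fin: "finite (carrier G)" and sH: "submon G H" and cf: "charon G H f"
    and g: "g \<in> carrier G"
  shows "\<exists>H' f'. submon G H' \<and> charon G H' f' \<and> H \<subseteq> H' \<and> g \<in> H'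
            \<and> (\<forall>a\<in>H. f' a = f a)"
proof -
  have o: "order G > 0" using fin by (simp add: order_gt_0_iff_finite)
  have ex: "0 < order G \<and> g [^] order G \<in> H"
    using o pow_order_eq_1[OF g] sH unfolding submon_def by simp
  define n :: nat where "n = (LEAST k. 0 < k \<and> g [^] k \<in> H)"
  have n: "0 < n \<and> g [^] n \<in> H" using LeastI[where P="\<lambda>k::nat. 0 < k \<and> g [^] k \<in> H", OF ex] unfolding n_def .
  have nmin: "\<And>k. 0 < k \<Longrightarrow> k < n \<Longrightarrow> g [^] k \<notin> H"
    unfolding n_def using not_less_Least by blast
  have "f (g [^] n) \<noteq> 0" using cf n unfolding charon_def by blast
  then obtain c where c: "c ^ n = f (g [^] n)" using complex_root_ex n by blast
  have "\<exists>H' f'. submon G H' \<and> charon G H' f' \<and> H \<subseteq> H' \<and> g \<in> H'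
            \<and> (\<forall>a\<in>H. f' a = f a) \<and> f' g = c"
    by (rule ext_core[OF fin sH cf g _ _ nmin c]) (use n in auto)
  then obtain H' f' where "submon G H'" "charon G H' f'" "H \<subseteq> H'" "g \<in> H'"
            "\<forall>a\<in>H. f' a = f a" by blast
  then show ?thesis by (intro exI[of _ H'] exI[of _ f']) simp
qed

lemma base_step:
  assumes fin: "finite (carrier G)" and x: "x \<in> carrier G" "x \<noteq> \<one>"
  shows "\<exists>H f. submon G H \<and> charon G H f \<and> x \<in> H \<and> f x \<noteq> 1"
proof -
  have sH: "submon G {\<one>}" unfolding submon_def by auto
  have cf: "charon G {\<one>} (\<lambda>_. 1)" unfolding charon_def by auto
  have o: "order G > 0" using fin by (simp add: order_gt_0_iff_finite)
  have ex: "0 < order G \<and> x [^] order G \<in> {\<one>}"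
    using o pow_order_eq_1[OF x(1)] by simp
  define n :: nat where "n = (LEAST k. 0 < k \<and> x [^] k \<in> {\<one>})"
  have n: "0 < n \<and> x [^] n \<in> {\<one>}" using LeastI[where P="\<lambda>k::nat. 0 < k \<and> x [^] k \<in> {\<one>}", OF ex] unfolding n_def .
  have nmin: "\<And>k. 0 < k \<Longrightarrow> k < n \<Longrightarrow> x [^] k \<notin> {\<one>}"
    unfolding n_def using not_less_Least by blast
  have n1: "n \<noteq> 1" using n x by auto
  define c where "c = exp (2 * of_real pi * \<i> / of_nat n)"
  have "c ^ n = exp (of_nat n * (2 * of_real pi * \<i> / of_nat n))"
    unfolding c_def by (simp only: exp_of_nat_mult)
  also have "of_nat n * (2 * of_real pi * \<i> / of_nat n) = 2 * of_real pi * \<i>" using n by simp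
  also have "exp (2 * of_real pi * \<i>) = 1" by simp
  finally have c: "c ^ n = (\<lambda>_. 1) (x [^] n)" by simp
  have c1: "c \<noteq> 1"
  proof
    assume "c = 1"
    then obtain k :: int where k: "2 * pi / n = of_int (2 * k) * pi"
      unfolding c_def exp_eq_1 by auto
    then have "(2*pi) * (1 / real n) = (2*pi) * of_int k" by (simp add: field_simps)
    then have "1 / real n = of_int k" using pi_gt_zero by (simp only: mult_cancel_left) simp
    moreover have "0 < 1 / real n" "1 / real n < 1" using n n1 by auto
    ultimately have "0 < real_of_int k" "real_of_int k < 1" by auto
    then have "0 < k" "k < 1" by simp_all
    then show False by simp
  qed
  have "\<exists>H' f'. submon G H' \<and> charon G H' f' \<and> {\<one>} \<subseteq> H' \<and> x \<in> H'
            \<and> (\<forall>a\<in>{\<one>}. f' a = 1) \<and> f' x = c"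
    by (rule ext_core[OF fin sH cf x(1) _ _ nmin c]) (use n in auto)
  then obtain H' f' where "submon G H'" "charon G H' f'" "x \<in> H'" "f' x = c" by blast
  then show ?thesis using c1 by (intro exI[of _ H'] exI[of _ f']) simp
qed

lemma iter_step:
  assumes fin: "finite (carrier G)" and x: "x \<in> carrier G" "x \<noteq> \<one>"
    and A: "finite A" "A \<subseteq> carrier G"
  shows "\<exists>H f. submon G H \<and> charon G H f \<and> x \<in> H \<and> f x \<noteq> 1 \<and> A \<subseteq> H"
  using A
proof (induction A rule: finite_induct)
  case empty
  obtain H f where "submon G H" "charon G H f" "x \<in> H" "f x \<noteq> 1"
    using base_step[OF fin x] by blast
  then show ?case by (intro exI[of _ H] exI[of _ f]) simp
next
  case (insert g A)
  then obtain H f where Hf: "submon G H" "charon G H f" "x \<in> H" "f x \<noteq> 1" "A \<subseteq> H" by auto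
  obtain H' f' where H': "submon G H'" "charon G H' f'" "H \<subseteq> H'" "g \<in> H'" "\<forall>a\<in>H. f' a = f a"
    using ext_step[OF fin Hf(1,2)] insert by blast
  have "f' x \<noteq> 1" using Hf(3,4) H'(5) by simp
  moreover have "insert g A \<subseteq> H'" using Hf(5) H'(3,4) by blast
  moreover have "x \<in> H'" using Hf(3) H'(3) by blast
  ultimately have "submon G H' \<and> charon G H' f' \<and> x \<in> H' \<and> f' x \<noteq> 1 \<and> insert g A \<subseteq> H'"
    using H' by simp
  then show ?case by (intro exI[of _ H'] exI[of _ f'])
qed

lemma separate:
  assumes fin: "finite (carrier G)" and x: "x \<in> carrier G" "x \<noteq> \<one>"
  shows "\<exists>f. charon G (carrier G) f \<and> f x \<noteq> 1"
proof -
  obtain H f where "submon G H" "charon G H f" "f x \<noteq> 1" "carrier G \<subseteq> H"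
    using iter_step[OF fin x fin] by blast
  moreover then have "H = carrier G" unfolding submon_def by blast
  ultimately show ?thesis by (intro exI[of _ f]) simp
qed

end


lemma dchar_sep:
  fixes m u :: nat
  assumes m1: "m > 1" and cu: "coprime u m" and u1: "u mod m \<noteq> 1"
  shows "\<exists>chi. dirichlet_char m chi \<and> chi (int u) \<noteq> 1"
proof -
  interpret R: residues "int m" "residue_ring (int m)" by unfold_locales (use m1 in simp)
  define G where "G = units_of (residue_ring (int m))"
  have cg: "comm_group G" unfolding G_def by (rule R.units_comm_group)
  have carr: "carrier G = {x. 0 < x \<and> x < int m \<and> coprime x (int m)}"
    unfolding G_def units_of_carrier by (rule R.res_units_eq)
  have fin: "finite (carrier G)" unfolding carr by (rule finite_subset[of _ "{0..<int m}"]) auto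
  have mult: "x \<otimes>\<^bsub>G\<^esub> y = (x * y) mod int m" for x y
    unfolding G_def units_of_mult by (rule R.res_mult_eq)
  have one: "\<one>\<^bsub>G\<^esub> = 1" unfolding G_def units_of_one by (rule R.res_one_eq)
  have m0: "int m \<noteq> 0" using m1 by simp
  have inG: "z mod int m \<in> carrier G" if "coprime z (int m)" for z
  proof -
    have "z mod int m \<noteq> 0"
    proof
      assume "z mod int m = 0"
      then have "int m dvd z" by auto
      then have "is_unit (int m)" using that by (metis coprime_absorb_right coprime_commute dvd_refl coprime_common_divisor)
      then show False using m1 by simp
    qed
    moreover have "0 \<le> z mod int m" "z mod int m < int m" using m1 by simp_all
    moreover have "coprime (z mod int m) (int m)" using that m0 by simp
    ultimately show ?thesis unfolding carr by auto
  qed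
  define x where "x = int u mod int m"
  have xc: "x \<in> carrier G" unfolding x_def using cu by (intro inG) simp
  have x1: "x \<noteq> \<one>\<^bsub>G\<^esub>" unfolding one x_def using u1 by (metis of_nat_1 of_nat_eq_iff zmod_int)
  obtain f where f: "charon G (carrier G) f" "f x \<noteq> 1"
    using comm_group.separate[OF cg fin xc x1] by blast
  define chi where "chi z = (if coprime z (int m) then f (z mod int m) else 0)" for z
  have fm: "f (a * b mod int m) = f a * f b" if "a \<in> carrier G" "b \<in> carrier G" for a b
    using f(1) that unfolding charon_def mult by blast
  have f0: "f a \<noteq> 0" if "a \<in> carrier G" for a using f(1) that unfolding charon_def by blast
  have "dirichlet_char m chi"
    unfolding dirichlet_char_def
  proof (intro conjI allI)
    fix a b :: int
    show "chi (a * b) = chi a * chi b"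
    proof (cases "coprime a (int m) \<and> coprime b (int m)")
      case True
      then have "f (a * b mod int m) = f ((a mod int m) * (b mod int m) mod int m)"
        by (simp add: mod_mult_eq)
      also have "\<dots> = f (a mod int m) * f (b mod int m)" using True inG fm by blast
      finally show ?thesis using True unfolding chi_def by simp
    next
      case False then show ?thesis unfolding chi_def by auto
    qed
  next
    fix a :: int
    have "coprime (a + int m) (int m) \<longleftrightarrow> coprime ((a + int m) mod int m) (int m)"
      by (rule coprime_mod_left_iff[OF m0, symmetric])
    also have "(a + int m) mod int m = a mod int m" by simp
    also have "coprime (a mod int m) (int m) \<longleftrightarrow> coprime a (int m)" by (rule coprime_mod_left_iff[OF m0])
    finally show "chi (a + int m) = chi a" unfolding chi_def by simp
  next
    fix a :: int
    show "chi a = 0 \<longleftrightarrow> \<not> coprime a (int m)" unfolding chi_def using f0 inG by auto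
  qed
  moreover have "chi (int u) = f x" unfolding chi_def x_def using cu by simp
  ultimately have "dirichlet_char m chi \<and> chi (int u) \<noteq> 1" using f(2) by simp
  then show ?thesis by (intro exI[of _ chi])
qed



lemma dc_period_nat:
  assumes "dirichlet_char m chi"
  shows "chi (x + int m * int k) = chi x"
proof (induction k)
  case 0 then show ?case by simp
next
  case (Suc k)
  have per: "\<And>y. chi (y + int m) = chi y" using assms unfolding dirichlet_char_def by blast
  have eq: "x + int m * int (Suc k) = (x + int m * int k) + int m" by (simp add: algebra_simps)
  have "chi (x + int m * int (Suc k)) = chi ((x + int m * int k) + int m)" by (simp only: eq)
  also have "\<dots> = chi (x + int m * int k)" by (rule per)
  finally show ?case using Suc by simp
qed

lemma dc_mod:
  assumes "dirichlet_char m chi"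
  shows "chi x = chi (x mod int m)"
proof (cases "x div int m \<ge> 0")
  case True
  have "x = x mod int m + int m * int (nat (x div int m))" using True by simp
  then have "chi x = chi (x mod int m + int m * int (nat (x div int m)))" by (rule arg_cong)
  also have "\<dots> = chi (x mod int m)" by (rule dc_period_nat[OF assms])
  finally show ?thesis .
next
  case False
  have "x mod int m = x + int m * int (nat (- (x div int m)))" using False
    by (simp add: minus_div_mult_eq_mod[symmetric] algebra_simps)
  then have "chi (x mod int m) = chi (x + int m * int (nat (- (x div int m))))" by (rule arg_cong)
  also have "\<dots> = chi x" by (rule dc_period_nat[OF assms])
  finally show ?thesis by simp
qed

lemma dc_nat_mod:
  assumes "dirichlet_char m chi"
  shows "chi (int a) = chi (int (a mod m))"
  using dc_mod[OF assms, of "int a"] by (simp add: zmod_int)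

lemma dc_mult:
  assumes "dirichlet_char m chi" shows "chi (x * y) = chi x * chi y"
  using assms unfolding dirichlet_char_def by blast

lemma dc_zero:
  assumes "dirichlet_char m chi" shows "chi x = 0 \<longleftrightarrow> \<not> coprime x (int m)"
  using assms unfolding dirichlet_char_def by blast

lemma dc_one:
  assumes "dirichlet_char m chi" shows "chi 1 = 1"
proof -
  have "chi 1 = chi 1 * chi 1" using dc_mult[OF assms, of 1 1] by simp
  moreover have "chi 1 \<noteq> 0" using dc_zero[OF assms, of 1] by simp
  ultimately show ?thesis by (metis mult_cancel_left1)
qed

lemma dc_pow:
  assumes "dirichlet_char m chi" shows "chi (x ^ k) = chi x ^ k"
  by (induction k) (simp_all add: dc_one[OF assms] dc_mult[OF assms])

lemma dc_unit_pow:
  assumes dc: "dirichlet_char m chi" and m1: "m > 1" and cx: "coprime x (int m)"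
  shows "chi x ^ totient m = 1"
proof -
  have m0: "int m \<noteq> 0" using m1 by simp
  define a where "a = nat (x mod int m)"
  have ia: "int a = x mod int m" unfolding a_def using m1 by simp
  have ca: "coprime a m"
  proof -
    have "coprime (x mod int m) (int m)" using cx m0 by simp
    then have "coprime (int a) (int m)" using ia by simp
    then show ?thesis by simp
  qed
  have "chi x = chi (int a)" using dc_mod[OF dc, of x] ia by simp
  then have "chi x ^ totient m = chi (int a ^ totient m)" using dc_pow[OF dc] by simp
  also have "int a ^ totient m = int (a ^ totient m)" by simp
  also have "chi (int (a ^ totient m)) = chi (int (a ^ totient m mod m))" by (rule dc_nat_mod[OF dc])
  also have "a ^ totient m mod m = 1"
    using euler_theorem[OF ca] m1 unfolding cong_def by simp
  finally show ?thesis using dc_one[OF dc] by simp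
qed

lemma dc_norm:
  assumes dc: "dirichlet_char m chi" and m1: "m > 1" and cx: "coprime x (int m)"
  shows "norm (chi x) = 1"
proof -
  have "m > 0" using m1 by linarith
  then have "totient m > 0" by simp
  then show ?thesis using power_eq_1_iff[OF dc_unit_pow[OF assms]] by simp
qed

lemma dc_cnj_mult:
  assumes dc: "dirichlet_char m chi" and m1: "m > 1" and cx: "coprime x (int m)"
  shows "cnj (chi x) * chi x = 1"
proof -
  have "chi x * cnj (chi x) = of_real ((norm (chi x))\<^sup>2)" by (rule complex_norm_square[symmetric])
  also have "\<dots> = 1" using dc_norm[OF assms] by simp
  finally show ?thesis by (simp add: mult.commute)
qed

lemma dc_cnj_mult_all:
  assumes dc: "dirichlet_char m chi" and m1: "m > 1"
  shows "cnj (chi x) * chi x * y x = y x \<or> \<not> coprime x (int m)"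
  using dc_cnj_mult[OF assms] by auto

lemma dc_norm_le:
  assumes dc: "dirichlet_char m chi" and m1: "m > 1"
  shows "norm (chi x) \<le> 1"
proof (cases "coprime x (int m)")
  case True then show ?thesis using dc_norm[OF dc m1] by simp
next
  case False then show ?thesis using dc_zero[OF dc, of x] by simp
qed

lemma dc_neg1:
  assumes dc: "dirichlet_char m chi"
  shows "chi (-1) = 1 \<or> chi (-1) = -1"
proof -
  have "chi ((-1) * (-1)) = chi (-1) * chi (-1)" by (rule dc_mult[OF dc])
  then have "chi (-1) ^ 2 = 1" using dc_one[OF dc] by (simp add: power2_eq_square)
  then show ?thesis using power2_eq_1_iff by blast
qed

lemma dc_prod_closed:
  assumes "dirichlet_char m chi" "dirichlet_char m psi"
  shows "dirichlet_char m (\<lambda>x. chi x * psi x)"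
  using assms unfolding dirichlet_char_def by (auto simp: algebra_simps)

lemma dc_cnj_closed:
  assumes "dirichlet_char m chi"
  shows "dirichlet_char m (\<lambda>x. cnj (chi x))"
  using assms unfolding dirichlet_char_def by auto

lemma dc_principal:
  shows "dirichlet_char m (principal_char m)"
  unfolding dirichlet_char_def principal_char_def
proof (intro conjI allI)
  fix x y :: int
  show "(if coprime (x * y) (int m) then 1 else 0) =
        (if coprime x (int m) then 1 else 0) * (if coprime y (int m) then 1 else (0::complex))" by simp
next
  fix x :: int
  have "coprime (x + int m) (int m) \<longleftrightarrow> coprime x (int m)"
  proof (cases "m = 0")
    case True then show ?thesis by simp
  next
    case False
    then have m0: "int m \<noteq> 0" by simp
    have "coprime (x + int m) (int m) \<longleftrightarrow> coprime ((x + int m) mod int m) (int m)"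
      by (rule coprime_mod_left_iff[OF m0, symmetric])
    also have "(x + int m) mod int m = x mod int m" by simp
    also have "coprime (x mod int m) (int m) \<longleftrightarrow> coprime x (int m)" by (rule coprime_mod_left_iff[OF m0])
    finally show ?thesis .
  qed
  then show "(if coprime (x + int m) (int m) then 1 else 0) = (if coprime x (int m) then 1 else (0::complex))"
    by simp
qed simp

lemma dc_finite:
  assumes m1: "m > 1"
  shows "finite {chi. dirichlet_char m chi}"
proof -
  define D where "D = {chi. dirichlet_char m chi}"
  define V where "V = insert 0 {z::complex. z ^ totient m = 1}"
  define Phi where "Phi chi = restrict (\<lambda>k. chi (int k)) {0..<m}" for chi :: "int \<Rightarrow> complex"
  have "m > 0" using m1 by linarith
  then have "1 \<le> totient m" by (simp add: Suc_le_eq)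
  then have finV: "finite V" unfolding V_def by (intro finite_insert[THEN iffD2] finite_roots_unity)
  have "Phi ` D \<subseteq> PiE {0..<m} (\<lambda>_. V)"
  proof
    fix y assume "y \<in> Phi ` D"
    then obtain chi where chi: "dirichlet_char m chi" "y = Phi chi" unfolding D_def by blast
    have "chi (int k) \<in> V" for k
    proof (cases "coprime (int k) (int m)")
      case True then show ?thesis using dc_unit_pow[OF chi(1) m1 True] unfolding V_def by simp
    next
      case False then show ?thesis using dc_zero[OF chi(1), of "int k"] unfolding V_def by simp
    qed
    then show "y \<in> PiE {0..<m} (\<lambda>_. V)" unfolding chi(2) Phi_def by auto
  qed
  moreover have "finite (PiE {0..<m} (\<lambda>_. V))" using finV by (intro finite_PiE) auto
  ultimately have fin: "finite (Phi ` D)" by (rule finite_subset)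
  have "inj_on Phi D"
  proof
    fix chi psi assume "chi \<in> D" "psi \<in> D" "Phi chi = Phi psi"
    then have dc: "dirichlet_char m chi" "dirichlet_char m psi" unfolding D_def by auto
    have eqk: "chi (int k) = psi (int k)" if "k < m" for k
    proof -
      have "Phi chi k = Phi psi k" using \<open>Phi chi = Phi psi\<close> by simp
      then show ?thesis using that unfolding Phi_def by simp
    qed
    show "chi = psi"
    proof
      fix x
      have "x mod int m = int (nat (x mod int m))" using m1 by simp
      moreover have "nat (x mod int m) < m" using m1 by (simp add: nat_less_iff)
      ultimately have "chi (x mod int m) = psi (x mod int m)" using eqk by metis
      then show "chi x = psi x" using dc_mod[OF dc(1), of x] dc_mod[OF dc(2), of x] by simp
    qed
  qed
  then show ?thesis using fin finite_imageD unfolding D_def by blast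
qed



lemma units_totatives:
  assumes m1: "m > 1" shows "units_mod m = totatives m"
proof (rule equalityI; rule subsetI)
  fix x assume "x \<in> units_mod m"
  then have x: "x < m" "coprime x m" by (auto simp: units_mod_def)
  have "x \<noteq> 0" using x m1 by (cases "x = 0") auto
  then show "x \<in> totatives m" using x by (simp add: totatives_def)
next
  fix x assume "x \<in> totatives m"
  then have x: "0 < x" "x \<le> m" "coprime x m" by (auto simp: totatives_def)
  have "x \<noteq> m" using x m1 by auto
  then show "x \<in> units_mod m" using x by (simp add: units_mod_def)
qed

lemma units_card: "m > 1 \<Longrightarrow> card (units_mod m) = totient m"
  using units_totatives by (simp add: totient_def)

lemma units_finite: "finite (units_mod m)"
  unfolding units_mod_def by auto

lemma one_units: "m > 1 \<Longrightarrow> 1 \<in> units_mod m"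
  unfolding units_mod_def by simp

lemma units_pos: "a \<in> units_mod m \<Longrightarrow> m > 1 \<Longrightarrow> a > 0"
  unfolding units_mod_def by (cases "a = 0") auto

lemma char_sum_unit_ne1:
  assumes m1: "m > 1" and u: "u \<in> units_mod m" "u \<noteq> 1"
  shows "(\<Sum>chi\<in>{chi. dirichlet_char m chi}. chi (int u)) = 0"
proof -
  define D where "D = {chi. dirichlet_char m chi}"
  have um: "u < m" "coprime u m" using u unfolding units_mod_def by auto
  then have "u mod m \<noteq> 1" using u by simp
  then obtain chi0 where c0: "dirichlet_char m chi0" "chi0 (int u) \<noteq> 1"
    using dchar_sep[OF m1 um(2)] by blast
  define T where "T chi = (\<lambda>x. chi0 x * chi x)" for chi :: "int \<Rightarrow> complex"
  define T' where "T' chi = (\<lambda>x. cnj (chi0 x) * chi x)" for chi :: "int \<Rightarrow> complex"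
  have bij: "bij_betw T D D"
  proof (rule bij_betw_byWitness[where f'=T'])
    show "\<forall>a\<in>D. T' (T a) = a"
    proof
      fix chi assume "chi \<in> D"
      then have dc: "dirichlet_char m chi" unfolding D_def by simp
      show "T' (T chi) = chi"
      proof
        fix x
        show "T' (T chi) x = chi x"
        proof (cases "coprime x (int m)")
          case True
          have "T' (T chi) x = (cnj (chi0 x) * chi0 x) * chi x" unfolding T_def T'_def by (simp add: mult.assoc)
          then show ?thesis using dc_cnj_mult[OF c0(1) m1 True] by simp
        next
          case False
          then show ?thesis unfolding T_def T'_def using dc_zero[OF dc, of x] by simp
        qed
      qed
    qed
    show "\<forall>a\<in>D. T (T' a) = a"
    proof
      fix chi assume "chi \<in> D"
      then have dc: "dirichlet_char m chi" unfolding D_def by simp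
      show "T (T' chi) = chi"
      proof
        fix x
        show "T (T' chi) x = chi x"
        proof (cases "coprime x (int m)")
          case True
          have "T (T' chi) x = (cnj (chi0 x) * chi0 x) * chi x" unfolding T_def T'_def by (simp add: mult_ac)
          then show ?thesis using dc_cnj_mult[OF c0(1) m1 True] by simp
        next
          case False
          then show ?thesis unfolding T_def T'_def using dc_zero[OF dc, of x] by simp
        qed
      qed
    qed
    show "T ` D \<subseteq> D" unfolding T_def D_def using dc_prod_closed[OF c0(1)] by auto
    show "T' ` D \<subseteq> D" unfolding T'_def D_def using dc_prod_closed[OF dc_cnj_closed[OF c0(1)]] by auto
  qed
  have "(\<Sum>chi\<in>D. chi (int u)) = (\<Sum>chi\<in>D. (T chi) (int u))"
    by (rule sum.reindex_bij_betw[OF bij, symmetric])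
  also have "\<dots> = chi0 (int u) * (\<Sum>chi\<in>D. chi (int u))" unfolding T_def by (simp add: sum_distrib_left)
  finally have "(1 - chi0 (int u)) * (\<Sum>chi\<in>D. chi (int u)) = 0" by (simp add: algebra_simps)
  then show ?thesis using c0(2) unfolding D_def by simp
qed

lemma mult_units_bij:
  assumes m1: "m > 1" and v: "v \<in> units_mod m"
  shows "bij_betw (\<lambda>u. (v * u) mod m) (units_mod m) (units_mod m)"
proof -
  have vm: "coprime v m" using v unfolding units_mod_def by simp
  have img: "(\<lambda>u. (v * u) mod m) ` units_mod m \<subseteq> units_mod m"
  proof
    fix y assume "y \<in> (\<lambda>u. (v * u) mod m) ` units_mod m"
    then obtain u where u: "u \<in> units_mod m" "y = (v * u) mod m" by blast
    have "coprime u m" using u unfolding units_mod_def by simp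
    then have "coprime (v * u) m" using vm by simp
    then have "coprime y m" using u m1 by simp
    moreover have "y < m" using u m1 by simp
    ultimately show "y \<in> units_mod m" unfolding units_mod_def by simp
  qed
  have inj: "inj_on (\<lambda>u. (v * u) mod m) (units_mod m)"
  proof
    fix x y assume xy: "x \<in> units_mod m" "y \<in> units_mod m" "(v * x) mod m = (v * y) mod m"
    have "[v * x = v * y] (mod m)" using xy(3) unfolding cong_def .
    then have "[x = y] (mod m)" using vm by (simp add: cong_mult_lcancel_nat)
    then show "x = y" using xy unfolding cong_def units_mod_def by simp
  qed
  have "(\<lambda>u. (v * u) mod m) ` units_mod m = units_mod m"
    by (rule endo_inj_surj[OF units_finite img inj])
  then show ?thesis using inj unfolding bij_betw_def by simp
qed

lemma char_sum_units_nonprincipal: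
  assumes dc: "dirichlet_char m chi" and m1: "m > 1" and np: "chi \<noteq> principal_char m"
  shows "(\<Sum>u\<in>units_mod m. chi (int u)) = 0"
proof -
  obtain x where x: "chi x \<noteq> principal_char m x" using np by blast
  have cx: "coprime x (int m)"
  proof (rule ccontr)
    assume "\<not> coprime x (int m)"
    then show False using x dc_zero[OF dc, of x] unfolding principal_char_def by simp
  qed
  then have chx: "chi x \<noteq> 1" using x unfolding principal_char_def by simp
  define v where "v = nat (x mod int m)"
  have iv: "int v = x mod int m" unfolding v_def using m1 by simp
  have m0: "int m \<noteq> 0" using m1 by simp
  have "coprime (int v) (int m)" using iv cx m0 by simp
  then have vc: "coprime v m" by simp
  have "v < m" unfolding v_def using m1 by (simp add: nat_less_iff)
  then have vU: "v \<in> units_mod m" using vc unfolding units_mod_def by simp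
  have chv: "chi (int v) = chi x" using iv dc_mod[OF dc, of x] by simp
  have "(\<Sum>u\<in>units_mod m. chi (int u)) = (\<Sum>u\<in>units_mod m. chi (int ((v * u) mod m)))"
    by (rule sum.reindex_bij_betw[OF mult_units_bij[OF m1 vU], symmetric])
  also have "\<dots> = (\<Sum>u\<in>units_mod m. chi (int v) * chi (int u))"
  proof (rule sum.cong[OF refl])
    fix u
    have "chi (int ((v * u) mod m)) = chi (int (v * u))" by (rule dc_nat_mod[OF dc, symmetric])
    also have "\<dots> = chi (int v * int u)" by simp
    also have "\<dots> = chi (int v) * chi (int u)" by (rule dc_mult[OF dc])
    finally show "chi (int ((v * u) mod m)) = chi (int v) * chi (int u)" .
  qed
  also have "\<dots> = chi x * (\<Sum>u\<in>units_mod m. chi (int u))" by (simp add: chv sum_distrib_left)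
  finally have "(1 - chi x) * (\<Sum>u\<in>units_mod m. chi (int u)) = 0" by (simp add: algebra_simps)
  then show ?thesis using chx by simp
qed

lemma card_chars:
  assumes m1: "m > 1"
  shows "card {chi. dirichlet_char m chi} = totient m"
proof -
  define D where "D = {chi. dirichlet_char m chi}"
  have finD: "finite D" unfolding D_def by (rule dc_finite[OF m1])
  have pD: "principal_char m \<in> D" unfolding D_def by (simp add: dc_principal)
  have "(\<Sum>u\<in>units_mod m. \<Sum>chi\<in>D. chi (int u)) = (\<Sum>u\<in>units_mod m. if u = 1 then of_nat (card D) else 0)"
  proof (rule sum.cong[OF refl])
    fix u assume u: "u \<in> units_mod m"
    show "(\<Sum>chi\<in>D. chi (int u)) = (if u = 1 then of_nat (card D) else 0)"
    proof (cases "u = 1")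
      case True
      have "(\<Sum>chi\<in>D. chi (int u)) = (\<Sum>chi\<in>D. 1)"
        using True by (intro sum.cong refl) (simp add: D_def dc_one)
      then show ?thesis using True by simp
    next
      case False then show ?thesis using char_sum_unit_ne1[OF m1 u] unfolding D_def by simp
    qed
  qed
  also have "\<dots> = of_nat (card D)" using one_units[OF m1] units_finite by (simp add: sum.delta)
  finally have A: "(\<Sum>u\<in>units_mod m. \<Sum>chi\<in>D. chi (int u)) = of_nat (card D)" .
  have "(\<Sum>u\<in>units_mod m. \<Sum>chi\<in>D. chi (int u)) = (\<Sum>chi\<in>D. \<Sum>u\<in>units_mod m. chi (int u))"
    by (rule sum.swap)
  also have "\<dots> = (\<Sum>chi\<in>D. if chi = principal_char m then of_nat (totient m) else 0)"
  proof (rule sum.cong[OF refl])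
    fix chi assume "chi \<in> D"
    then have dc: "dirichlet_char m chi" unfolding D_def by simp
    show "(\<Sum>u\<in>units_mod m. chi (int u)) = (if chi = principal_char m then of_nat (totient m) else 0)"
    proof (cases "chi = principal_char m")
      case True
      have "(\<Sum>u\<in>units_mod m. chi (int u)) = (\<Sum>u\<in>units_mod m. 1)"
        using True by (intro sum.cong refl) (simp add: principal_char_def units_mod_def)
      then show ?thesis using True units_card[OF m1] by simp
    next
      case False then show ?thesis using char_sum_units_nonprincipal[OF dc m1] by simp
    qed
  qed
  also have "\<dots> = of_nat (totient m)" using pD finD by (simp add: sum.delta)
  finally have "(of_nat (card D) :: complex) = of_nat (totient m)" using A by simp
  then show ?thesis unfolding D_def by (simp only: of_nat_eq_iff)
qed

lemma orth:
  assumes m1: "m > 1" and a: "a \<in> units_mod m" and r: "r \<in> units_mod m"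
  shows "(\<Sum>chi\<in>{chi. dirichlet_char m chi}. cnj (chi (int a)) * chi (int r))
           = (if a = r then of_nat (totient m) else 0)"
proof -
  define D where "D = {chi. dirichlet_char m chi}"
  define t where "t = totient m"
  have t0: "t > 0" unfolding t_def using m1 by simp
  have ca: "coprime a m" "a < m" using a unfolding units_mod_def by auto
  have cr: "coprime r m" "r < m" using r unfolding units_mod_def by auto
  define a' where "a' = a ^ (t - 1) mod m"
  have "a * a ^ (t - 1) = a ^ t" using t0 by (simp add: power_Suc[symmetric])
  then have aa: "(a * a') mod m = 1" unfolding a'_def t_def
    using euler_theorem[OF ca(1)] m1 by (simp add: mod_mult_right_eq cong_def)
  define w where "w = (a' * r) mod m"
  have cw: "coprime w m"
  proof -
    have "coprime (a * a') m" using aa m1 by (metis coprime_1_left coprime_mod_left_iff gr_implies_not0)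
    then have "coprime a' m" by simp
    then show ?thesis unfolding w_def using cr m1 by simp
  qed
  have wU: "w \<in> units_mod m" unfolding units_mod_def using cw m1 by (simp add: w_def)
  have tm: "cnj (chi (int a)) * chi (int r) = chi (int w)" if dc: "dirichlet_char m chi" for chi
  proof -
    have c_a: "coprime (int a) (int m)" using ca by simp
    have "chi (int a') * chi (int a) = chi (int (a * a'))" by (simp add: dc_mult[OF dc, symmetric] mult.commute)
    also have "\<dots> = chi (int ((a * a') mod m))" by (rule dc_nat_mod[OF dc])
    also have "\<dots> = 1" using aa dc_one[OF dc] by simp
    finally have e1: "chi (int a') * chi (int a) = 1" .
    have e2: "cnj (chi (int a)) * chi (int a) = 1" by (rule dc_cnj_mult[OF dc m1 c_a])
    have "chi (int a) \<noteq> 0" using e2 by auto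
    then have "cnj (chi (int a)) = chi (int a')" using e1 e2 by (metis mult_right_cancel)
    then have "cnj (chi (int a)) * chi (int r) = chi (int (a' * r))" by (simp add: dc_mult[OF dc])
    also have "\<dots> = chi (int w)" unfolding w_def by (rule dc_nat_mod[OF dc])
    finally show ?thesis .
  qed
  have "(\<Sum>chi\<in>D. cnj (chi (int a)) * chi (int r)) = (\<Sum>chi\<in>D. chi (int w))"
    using tm unfolding D_def by (intro sum.cong) auto
  also have "\<dots> = (if a = r then of_nat t else 0)"
  proof (cases "a = r")
    case True
    have "w = 1" unfolding w_def using aa True by (simp add: mult.commute)
    then have "(\<Sum>chi\<in>D. chi (int w)) = (\<Sum>chi\<in>D. 1)" by (intro sum.cong) (auto simp: D_def dc_one)
    then show ?thesis using True card_chars[OF m1] unfolding D_def t_def by simp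
  next
    case False
    have "w \<noteq> 1"
    proof
      assume w1: "w = 1"
      have "a mod m = (a * w) mod m" using w1 by simp
      also have "\<dots> = (a * (a' * r)) mod m" unfolding w_def by (simp add: mod_mult_right_eq)
      also have "\<dots> = ((a * a') * r) mod m" by (simp add: mult.assoc)
      also have "\<dots> = (((a * a') mod m) * r) mod m" by (simp add: mod_mult_left_eq)
      also have "\<dots> = r mod m" using aa by simp
      finally show False using ca cr False by simp
    qed
    then show ?thesis using char_sum_unit_ne1[OF m1 wU] False unfolding D_def by simp
  qed
  finally show ?thesis unfolding D_def t_def .
qed



lemma coprime_add_m: "coprime (x + int m) (int m) \<longleftrightarrow> coprime x (int m)"
proof (cases "m = 0")
  case True then show ?thesis by simp
next
  case False
  then have m0: "int m \<noteq> 0" by simp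
  have "coprime (x + int m) (int m) \<longleftrightarrow> coprime ((x + int m) mod int m) (int m)"
    by (rule coprime_mod_left_iff[OF m0, symmetric])
  also have "(x + int m) mod int m = x mod int m" by simp
  also have "coprime (x mod int m) (int m) \<longleftrightarrow> coprime x (int m)" by (rule coprime_mod_left_iff[OF m0])
  finally show ?thesis .
qed

lemma spec_eq_iff:
  assumes "x \<ge> 1" "y \<ge> 1"
  shows "spec_class b x = spec_class b y \<longleftrightarrow> [x = y] (mod b)"
proof -
  have "spec_class b x = spec_class b y \<longleftrightarrow> [x - 1 = y - 1] (mod b)"
    unfolding spec_class_def cong_def ..
  also have "\<dots> \<longleftrightarrow> [x - 1 + 1 = y - 1 + 1] (mod b)" by (rule cong_add_rcancel_nat[symmetric])
  also have "x - 1 + 1 = x" using assms by simp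
  also have "y - 1 + 1 = y" using assms by simp
  finally show ?thesis .
qed

lemma cong_refl_iff:
  fixes m x y b :: nat
  assumes "x \<le> m" "y \<le> m"
  shows "[m - x = m - y] (mod b) \<longleftrightarrow> [x = y] (mod b)"
proof -
  have "[m - x = m - y] (mod b) \<longleftrightarrow> [(m - x) + (x + y) = (m - y) + (x + y)] (mod b)"
    by (rule cong_add_rcancel_nat[symmetric])
  also have "(m - x) + (x + y) = m + y" using assms by simp
  also have "(m - y) + (x + y) = m + x" using assms by simp
  also have "[m + y = m + x] (mod b) \<longleftrightarrow> [y = x] (mod b)" by (rule cong_add_lcancel_nat)
  also have "\<dots> \<longleftrightarrow> [x = y] (mod b)" by (rule cong_sym_eq)
  finally show ?thesis .
qed

lemma refl_units:
  assumes m1: "m > 1" and a: "a \<in> units_mod m"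
  shows "m - a \<in> units_mod m" "m - (m - a) = a" "m - a \<ge> 1" "a \<ge> 1" "a \<le> m"
proof -
  have a0: "a > 0" using units_pos[OF a m1] .
  have am: "a < m" "coprime a m" using a unfolding units_mod_def by auto
  have "coprime (m - a) m"
  proof -
    have "coprime (- int a) (int m)" using am by simp
    then have "coprime (- int a + int m) (int m)" by (simp only: coprime_add_m)
    then have "coprime (int m - int a) (int m)" by (simp add: algebra_simps)
    then have "coprime (int (m - a)) (int m)" using am by (simp add: of_nat_diff)
    then show ?thesis by simp
  qed
  then show "m - a \<in> units_mod m" unfolding units_mod_def using a0 am by simp
  show "m - (m - a) = a" "m - a \<ge> 1" "a \<ge> 1" "a \<le> m" using a0 am by auto
qed

lemma refl_bij:
  assumes m1: "m > 1"
  shows "bij_betw (\<lambda>a. m - a) (units_mod m) (units_mod m)"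
  by (rule bij_betw_byWitness[where f'="\<lambda>a. m - a"]) (use refl_units[OF m1] in auto)

lemma Sbar_refl:
  assumes m1: "m > 1" and a: "a \<in> units_mod m"
    and reflection: "\<And>a. a \<in> units_mod m \<Longrightarrow> S a + S (m - a) = -1"
  shows "Sbar b m S (spec_class b (m - a)) = -1 - Sbar b m S (spec_class b a)"
proof -
  define C where "C R = {x \<in> units_mod m. spec_class b x = R}" for R
  define R where "R = spec_class b a"
  define R' where "R' = spec_class b (m - a)"
  have finC: "finite (C R)" unfolding C_def using units_finite by simp
  have img: "C R' = (\<lambda>x. m - x) ` C R"
  proof (rule equalityI; rule subsetI)
    fix y assume "y \<in> C R'"
    then have y: "y \<in> units_mod m" "spec_class b y = spec_class b (m - a)" unfolding C_def R'_def by auto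
    note ry = refl_units[OF m1 y(1)] and ra = refl_units[OF m1 a]
    have "[y = m - a] (mod b)" using y(2) spec_eq_iff[OF ry(4) ra(3)] by simp
    then have "[m - (m - y) = m - a] (mod b)" using ry(2) by simp
    then have "[m - y = a] (mod b)" using cong_refl_iff[of "m - y" m a b] ra(5) by simp
    then have "spec_class b (m - y) = R" unfolding R_def using spec_eq_iff[OF ry(3) ra(4)] by simp
    then have "m - y \<in> C R" unfolding C_def using ry(1) by simp
    then show "y \<in> (\<lambda>x. m - x) ` C R" using ry(2) by (metis image_eqI)
  next
    fix y assume "y \<in> (\<lambda>x. m - x) ` C R"
    then obtain x where x: "x \<in> units_mod m" "spec_class b x = spec_class b a" "y = m - x"
      unfolding C_def R_def by auto
    note rx = refl_units[OF m1 x(1)] and ra = refl_units[OF m1 a]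
    have "[x = a] (mod b)" using x(2) spec_eq_iff[OF rx(4) ra(4)] by simp
    then have "[m - x = m - a] (mod b)" using cong_refl_iff[of x m a b] rx(5) ra(5) by simp
    then have "spec_class b (m - x) = spec_class b (m - a)" using spec_eq_iff[OF rx(3) ra(3)] by simp
    then show "y \<in> C R'" unfolding C_def R'_def using rx(1) x(3) by simp
  qed
  have inj: "inj_on (\<lambda>x. m - x) (C R)"
  proof
    fix x y assume "x \<in> C R" "y \<in> C R" "m - x = m - y"
    then have "x \<le> m" "y \<le> m" unfolding C_def units_mod_def by auto
    then show "x = y" using \<open>m - x = m - y\<close> by simp
  qed
  have cardeq: "card (C R') = card (C R)" unfolding img by (rule card_image[OF inj])
  have "a \<in> C R" unfolding C_def R_def using a by simp
  then have cpos: "card (C R) > 0" using finC by (auto simp: card_gt_0_iff)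
  have "(\<Sum>y\<in>C R'. S y) = (\<Sum>x\<in>C R. S (m - x))" unfolding img by (rule sum.reindex[OF inj, unfolded comp_def])
  also have "\<dots> = (\<Sum>x\<in>C R. -1 - S x)"
  proof (rule sum.cong[OF refl])
    fix x assume "x \<in> C R"
    then have "x \<in> units_mod m" unfolding C_def by simp
    then show "S (m - x) = -1 - S x" using reflection by (simp add: algebra_simps eq_diff_eq)
  qed
  also have "\<dots> = - real (card (C R)) - (\<Sum>x\<in>C R. S x)" by (simp add: sum_subtractf)
  finally have sumeq: "(\<Sum>y\<in>C R'. S y) = - real (card (C R)) - (\<Sum>x\<in>C R. S x)" .
  have "Sbar b m S R' = (\<Sum>y\<in>C R'. S y) / real (card (C R'))" unfolding Sbar_def C_def ..
  also have "\<dots> = (- real (card (C R)) - (\<Sum>x\<in>C R. S x)) / real (card (C R))" using sumeq cardeq by simp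
  also have "\<dots> = -1 - (\<Sum>x\<in>C R. S x) / real (card (C R))" using cpos by (simp add: field_simps)
  also have "(\<Sum>x\<in>C R. S x) / real (card (C R)) = Sbar b m S R" unfolding Sbar_def C_def ..
  finally show ?thesis unfolding R_def R'_def .
qed

lemma Scirc_refl:
  assumes m1: "m > 1" and a: "a \<in> units_mod m"
    and reflection: "\<And>a. a \<in> units_mod m \<Longrightarrow> S a + S (m - a) = -1"
  shows "Scirc b m S (m - a) = - Scirc b m S a"
proof -
  have "S (m - a) = -1 - S a" using reflection[OF a] by (simp add: algebra_simps eq_diff_eq)
  then show ?thesis unfolding Scirc_def using Sbar_refl[where S=S and b=b, OF m1 a reflection] by simp
qed

lemma Shat_even:
  assumes m1: "m > 1" and dc: "dirichlet_char m chi" and ev: "chi (-1) = 1"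
    and reflection: "\<And>a. a \<in> units_mod m \<Longrightarrow> S a + S (m - a) = -1"
  shows "Shat b m S chi = 0"
proof -
  define X where "X = (\<Sum>a\<in>units_mod m. complex_of_real (Scirc b m S a) * cnj (chi (int a)))"
  have "X = (\<Sum>a\<in>units_mod m. complex_of_real (Scirc b m S (m - a)) * cnj (chi (int (m - a))))"
    unfolding X_def by (rule sum.reindex_bij_betw[OF refl_bij[OF m1], symmetric])
  also have "\<dots> = (\<Sum>a\<in>units_mod m. - (complex_of_real (Scirc b m S a) * cnj (chi (int a))))"
  proof (rule sum.cong[OF refl])
    fix a assume a: "a \<in> units_mod m"
    have am: "a \<le> m" using refl_units[OF m1 a] by simp
    have "chi (int (m - a)) = chi (- int a + int m)" using am by (simp add: of_nat_diff)
    also have "\<dots> = chi (- int a)" using dc unfolding dirichlet_char_def by blast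
    also have "\<dots> = chi ((-1) * int a)" by simp
    also have "\<dots> = chi (int a)" using dc_mult[OF dc, of "-1" "int a"] ev by simp
    finally have "chi (int (m - a)) = chi (int a)" .
    then show "complex_of_real (Scirc b m S (m - a)) * cnj (chi (int (m - a))) =
               - (complex_of_real (Scirc b m S a) * cnj (chi (int a)))"
      using Scirc_refl[where S=S and b=b, OF m1 a reflection] by simp
  qed
  also have "\<dots> = - X" unfolding X_def by (simp add: sum_negf)
  finally have "X = 0" by simp
  then show ?thesis unfolding Shat_def X_def by simp
qed

lemma Shat_sum_all:
  assumes m1: "m > 1" and r: "r \<in> units_mod m"
  shows "(\<Sum>chi\<in>{chi. dirichlet_char m chi}. Shat b m S chi * chi (int r)) = complex_of_real (Scirc b m S r)"
proof -
  define D where "D = {chi. dirichlet_char m chi}"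
  define t where "t = totient m"
  have t0: "t > 0" unfolding t_def using m1 by simp
  have "(\<Sum>chi\<in>D. Shat b m S chi * chi (int r)) =
        (\<Sum>chi\<in>D. \<Sum>a\<in>units_mod m. (1 / of_nat t) * (complex_of_real (Scirc b m S a) * (cnj (chi (int a)) * chi (int r))))"
    unfolding Shat_def t_def by (simp add: sum_distrib_left sum_distrib_right mult_ac)
  also have "\<dots> = (\<Sum>a\<in>units_mod m. \<Sum>chi\<in>D. (1 / of_nat t) * (complex_of_real (Scirc b m S a) * (cnj (chi (int a)) * chi (int r))))"
    by (rule sum.swap)
  also have "\<dots> = (\<Sum>a\<in>units_mod m. (1 / of_nat t) * (complex_of_real (Scirc b m S a) * (\<Sum>chi\<in>D. cnj (chi (int a)) * chi (int r))))"
    by (simp add: sum_distrib_left)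
  also have "\<dots> = (\<Sum>a\<in>units_mod m. (1 / of_nat t) * (complex_of_real (Scirc b m S a) * (if a = r then of_nat t else 0)))"
    by (intro sum.cong refl) (simp add: orth[OF m1 _ r] D_def t_def)
  also have "\<dots> = (\<Sum>a\<in>units_mod m. if a = r then complex_of_real (Scirc b m S a) else 0)"
    using t0 by (intro sum.cong refl) simp
  also have "\<dots> = complex_of_real (Scirc b m S r)" using r units_finite by (simp add: sum.delta')
  finally show ?thesis unfolding D_def .
qed

lemma Shat_sum_odd:
  assumes m1: "m > 1" and r: "r \<in> units_mod m"
    and reflection: "\<And>a. a \<in> units_mod m \<Longrightarrow> S a + S (m - a) = -1"
  shows "(\<Sum>chi\<in>{chi. dirichlet_char m chi \<and> chi (-1) = -1}. Shat b m S chi * chi (int r))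
          = complex_of_real (Scirc b m S r)"
proof -
  have "(\<Sum>chi\<in>{chi. dirichlet_char m chi \<and> chi (-1) = -1}. Shat b m S chi * chi (int r))
        = (\<Sum>chi\<in>{chi. dirichlet_char m chi}. Shat b m S chi * chi (int r))"
  proof (rule sum.mono_neutral_left)
    show "finite {chi. dirichlet_char m chi}" by (rule dc_finite[OF m1])
    show "{chi. dirichlet_char m chi \<and> chi (-1) = -1} \<subseteq> {chi. dirichlet_char m chi}" by auto
    show "\<forall>i\<in>{chi. dirichlet_char m chi} - {chi. dirichlet_char m chi \<and> chi (-1) = -1}.
            Shat b m S i * i (int r) = 0"
    proof
      fix chi assume "chi \<in> {chi. dirichlet_char m chi} - {chi. dirichlet_char m chi \<and> chi (-1) = -1}"
      then have dc: "dirichlet_char m chi" and "chi (-1) \<noteq> -1" by auto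
      then have "chi (-1) = 1" using dc_neg1[OF dc] by blast
      then show "Shat b m S chi * chi (int r) = 0" using Shat_even[where S=S and b=b, OF m1 dc _ reflection] by simp
    qed
  qed
  also have "\<dots> = complex_of_real (Scirc b m S r)" by (rule Shat_sum_all[OF m1 r])
  finally show ?thesis .
qed


lemma norm_h: "norm (of_nat p powr (- s) :: complex) = real p powr (- Re s)"
  using norm_powr_real_powr[of "of_nat p" "- s"] by simp

lemma dom_summable:
  fixes f :: "nat \<Rightarrow> complex"
  assumes sg: "\<sigma> > 1" and le: "\<And>n. norm (f n) \<le> real n powr (- \<sigma>)"
  shows "f summable_on A"
proof -
  have "summable (\<lambda>n. real n powr (- \<sigma>))" using summable_real_powr_iff sg by simp
  then have "summable (\<lambda>n. norm (f n))"
    by (rule summable_comparison_test'[where N=0]) (use le in simp)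
  then have "f summable_on UNIV" by (rule norm_summable_imp_summable_on)
  then show ?thesis by (rule summable_on_subset) simp
qed

lemma infsum_finsum:
  fixes f :: "'i \<Rightarrow> 'a \<Rightarrow> complex"
  assumes "finite I" "\<And>i. i \<in> I \<Longrightarrow> f i summable_on A"
  shows "(\<lambda>x. \<Sum>i\<in>I. f i x) summable_on A \<and> infsum (\<lambda>x. \<Sum>i\<in>I. f i x) A = (\<Sum>i\<in>I. infsum (f i) A)"
  using assms
proof (induction I rule: finite_induct)
  case empty then show ?case by simp
next
  case (insert j I)
  have s1: "f j summable_on A" using insert.prems by simp
  have IH: "(\<lambda>x. \<Sum>i\<in>I. f i x) summable_on A \<and> infsum (\<lambda>x. \<Sum>i\<in>I. f i x) A = (\<Sum>i\<in>I. infsum (f i) A)"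
    using insert.IH insert.prems by blast
  have e: "(\<lambda>x. \<Sum>i\<in>insert j I. f i x) = (\<lambda>x. f j x + (\<Sum>i\<in>I. f i x))"
    using insert.hyps by simp
  show ?case unfolding e using insert.hyps s1 IH by (simp add: summable_on_add infsum_add)
qed

theorem mainTheorem8:
  fixes b l m :: nat and S :: "nat \<Rightarrow> real" and s :: complex
  assumes hb: "b \<ge> 2" and hl: "l \<ge> 1" and hm: "m = b ^ (l + 1)"
    and reflection: "\<And>a. a \<in> units_mod m \<Longrightarrow> S a + S (m - a) = -1"
    and hs: "Re s > 1"
  shows "Fcirc b m S s
           + (\<Sum>p\<in>{p. prime p \<and> p \<le> m \<and> \<not> p dvd b}.
                complex_of_real (Scirc b m S (p mod m)) * of_nat p powr (- s))
         = (\<Sum>chi\<in>{chi. dirichlet_char m chi \<and> chi (-1) = -1}. Shat b m S chi * Pchi s chi)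
       \<and> (\<forall>chi. dirichlet_char m chi \<and> chi (-1) = -1 \<longrightarrow> chi \<noteq> principal_char m)"
proof
  have m1: "m > 1" unfolding hm using hb by (intro one_less_power) auto
  have cpm: "coprime p m \<longleftrightarrow> coprime p b" for p :: nat unfolding hm by auto
  define P where "P = {p::nat. prime p}"
  define h where "h p = (of_nat p powr (- s) :: complex)" for p :: nat
  define Dodd where "Dodd = {chi. dirichlet_char m chi \<and> chi (-1) = -1}"
  have finDodd: "finite Dodd"
    by (rule finite_subset[OF _ dc_finite[OF m1]]) (auto simp: Dodd_def)
  have dcD: "dirichlet_char m chi" if "chi \<in> Dodd" for chi using that unfolding Dodd_def by simp
  have sumchi: "(\<lambda>p. chi (int p) * h p) summable_on P" if "chi \<in> Dodd" for chi
  proof (rule dom_summable[OF hs])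
    fix n :: nat
    have "norm (chi (int n) * h n) = norm (chi (int n)) * real n powr (- Re s)"
      unfolding h_def by (simp add: norm_mult norm_h)
    also have "\<dots> \<le> real n powr (- Re s)"
      using dc_norm_le[OF dcD[OF that] m1, of "int n"] by (intro mult_left_le_one_le) auto
    finally show "norm (chi (int n) * h n) \<le> real n powr (- Re s)" .
  qed
  define G where "G p = (\<Sum>chi\<in>Dodd. Shat b m S chi * (chi (int p) * h p))" for p
  have fs: "(\<lambda>p. Shat b m S chi * (chi (int p) * h p)) summable_on P" if "chi \<in> Dodd" for chi
    using sumchi[OF that] by (rule summable_on_cmult_right)
  have IF: "G summable_on P \<and> infsum G P = (\<Sum>chi\<in>Dodd. infsum (\<lambda>p. Shat b m S chi * (chi (int p) * h p)) P)"
    unfolding G_def by (rule infsum_finsum[OF finDodd]) (rule fs)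
  have Gsum: "G summable_on P" using IF by blast
  have RHS: "(\<Sum>chi\<in>Dodd. Shat b m S chi * Pchi s chi) = infsum G P"
  proof -
    have "(\<Sum>chi\<in>Dodd. Shat b m S chi * Pchi s chi) =
          (\<Sum>chi\<in>Dodd. infsum (\<lambda>p. Shat b m S chi * (chi (int p) * h p)) P)"
    proof (rule sum.cong[OF refl])
      fix chi assume c: "chi \<in> Dodd"
      have "Pchi s chi = infsum (\<lambda>p. chi (int p) * h p) P" unfolding Pchi_def h_def P_def ..
      then show "Shat b m S chi * Pchi s chi = infsum (\<lambda>p. Shat b m S chi * (chi (int p) * h p)) P"
        using infsum_cmult_right[of "Shat b m S chi" "\<lambda>p. chi (int p) * h p" P] sumchi[OF c] by simp
    qed
    then show ?thesis using IF by simp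
  qed
  have Gval: "G p = (if coprime p b then complex_of_real (Scirc b m S (p mod m)) * h p else 0)" for p
  proof -
    have G1: "G p = (\<Sum>chi\<in>Dodd. Shat b m S chi * chi (int p)) * h p"
      unfolding G_def by (simp add: sum_distrib_right mult.assoc)
    show ?thesis
    proof (cases "coprime p b")
      case True
      then have cp: "coprime p m" using cpm by simp
      define r where "r = p mod m"
      have m0: "m \<noteq> 0" using m1 by simp
      have "coprime r m" unfolding r_def using cp m0 by simp
      moreover have "r < m" unfolding r_def using m1 by simp
      ultimately have rU: "r \<in> units_mod m" unfolding units_mod_def by simp
      have "(\<Sum>chi\<in>Dodd. Shat b m S chi * chi (int p)) = (\<Sum>chi\<in>Dodd. Shat b m S chi * chi (int r))"
      proof (rule sum.cong[OF refl])
        fix chi assume "chi \<in> Dodd"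
        then have "chi (int p) = chi (int r)" unfolding r_def by (rule dc_nat_mod[OF dcD])
        then show "Shat b m S chi * chi (int p) = Shat b m S chi * chi (int r)" by (simp only:)
      qed
      also have "\<dots> = complex_of_real (Scirc b m S r)"
        unfolding Dodd_def by (rule Shat_sum_odd[where S=S and b=b, OF m1 rU reflection])
      finally show ?thesis using G1 True unfolding r_def by simp
    next
      case False
      then have "\<not> coprime (int p) (int m)" using cpm by simp
      then have z: "chi (int p) = 0" if "chi \<in> Dodd" for chi using dc_zero[OF dcD[OF that]] by simp
      have "(\<Sum>chi\<in>Dodd. Shat b m S chi * chi (int p)) = 0"
        by (rule sum.neutral) (use z in simp)
      then show ?thesis using G1 False by simp
    qed
  qed
  define A where "A = {p. prime p \<and> p > m \<and> coprime p b}"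
  define B where "B = {p. prime p \<and> p \<le> m \<and> \<not> p dvd b}"
  have AP: "A \<subseteq> P" and BP: "B \<subseteq> P" unfolding A_def B_def P_def by auto
  have AB: "A \<inter> B = {}" unfolding A_def B_def by auto
  have finB: "finite B" by (rule finite_subset[of _ "{..m}"]) (auto simp: B_def)
  have "infsum G P = infsum G (A \<union> B)"
  proof (rule infsum_cong_neutral)
    fix x assume "x \<in> (A \<union> B) - P" then show "G x = 0" using AP BP by blast
  next
    fix x assume x: "x \<in> P - (A \<union> B)"
    have "\<not> coprime x b"
    proof
      assume c: "coprime x b"
      have pr: "prime x" using x unfolding P_def by simp
      then have "x \<le> m" using x c unfolding A_def by auto
      then have "x dvd b" using x pr unfolding B_def by auto
      then have "is_unit x" using c by (simp add: coprime_absorb_left)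
      then show False using pr by simp
    qed
    then show "G x = 0" using Gval by simp
  qed simp
  also have "\<dots> = infsum G A + infsum G B"
    by (rule infsum_Un_disjoint[OF summable_on_subset[OF Gsum AP] summable_on_subset[OF Gsum BP] AB])
  also have "infsum G A = Fcirc b m S s"
    unfolding Fcirc_def A_def
  proof (rule infsum_cong)
    fix p assume "p \<in> {p. prime p \<and> p > m \<and> coprime p b}"
    then show "G p = complex_of_real (Scirc b m S (p mod m)) * of_nat p powr (- s)"
      using Gval unfolding h_def by simp
  qed
  also have "infsum G B = (\<Sum>p\<in>{p. prime p \<and> p \<le> m \<and> \<not> p dvd b}.
                complex_of_real (Scirc b m S (p mod m)) * of_nat p powr (- s))"
  proof -
    have "infsum G B = sum G B" using finB by simp
    also have "\<dots> = (\<Sum>p\<in>B. complex_of_real (Scirc b m S (p mod m)) * of_nat p powr (- s))"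
    proof (rule sum.cong[OF refl])
      fix p assume "p \<in> B"
      then have "prime p" "\<not> p dvd b" unfolding B_def by auto
      then have "coprime p b" by (rule prime_imp_coprime)
      then show "G p = complex_of_real (Scirc b m S (p mod m)) * of_nat p powr (- s)"
        using Gval unfolding h_def by simp
    qed
    finally show ?thesis unfolding B_def .
  qed
  finally show "Fcirc b m S s
           + (\<Sum>p\<in>{p. prime p \<and> p \<le> m \<and> \<not> p dvd b}.
                complex_of_real (Scirc b m S (p mod m)) * of_nat p powr (- s))
         = (\<Sum>chi\<in>{chi. dirichlet_char m chi \<and> chi (-1) = -1}. Shat b m S chi * Pchi s chi)"
    using RHS unfolding Dodd_def by simp
next
  show "\<forall>chi. dirichlet_char m chi \<and> chi (-1) = -1 \<longrightarrow> chi \<noteq> principal_char m"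
  proof (intro allI impI)
    fix chi :: "int \<Rightarrow> complex" assume "dirichlet_char m chi \<and> chi (-1) = -1"
    moreover have "principal_char m (-1) = 1" unfolding principal_char_def by simp
    ultimately show "chi \<noteq> principal_char m" by auto
  qed
qed

end
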